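(* Let $\ell$ be an integer with $1<\ell<\infty$. Then under $T_\ell$: (1) for every $k\ge1$ the word $F_k$ is a soliton of speed $\min(\ell,k)$, i.e. $T_\ell$ maps $F_k$ at $p$ to $F_k$ at $p+\min(\ell,k)$; (2) for every slow basic soliton $A$ (a nonempty word in the letters $F,B_a,U_a$, $a\ge1$, containing neither $FF$ nor $FU_a$ consecutively), $T_\ell$ maps $A$ at $p$ to $A$ at $p+1$, i.e. it acts exactly as $T_\infty$ does.
   Context: Box-basket-ball system. A site state is a triple $(a,b,c)$ of nonnegative integers with $a=b-c+1$ (one box, $b$ baskets, $c$ balls). $V=(1,0,0)$, $F=(0,0,1)$, $B_a=(a+1,a,0)$, $U_a=(a,a,1)$ ($a\ge1$), $F_k=F\cdots F$ ($k$ letters). A state is a sequence $(S_i)_{i\in\mathbb Z}$ of site states, all but finitely many equal to $V$. For a word $A=A_1\cdots A_n$, "$A$ at $p$" is the state with $S_{p+j-1}=A_j$ ($1\le j\le n$), vacuum elsewhere. The map $R$: for a carrier $(a,b,c)$ and site $(d,e,f)$, $R$ produces a site $(d',e',f')$ and carrier $(a',b',c')$ with $d'=d+\min(a+b,a+c,b+f)-\min(e+c,d+c,d+b)$, $e'=e+\min(a+b,a+c,b+f)-\min(a+e,d+f,e+f)$, $f'=f+\min(e+c,d+c,d+b)-\min(a+e,d+f,e+f)$, $a'=a-\min(a+b,a+c,b+f)+\min(e+c,d+c,d+b)$, $b'=b-\min(a+b,a+c,b+f)+\min(a+e,d+f,e+f)$, $c'=c-\min(e+c,d+c,d+b)+\min(a+e,d+f,e+f)$.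 Time evolution $T_\ell$ (integer $\ell\ge1$): a carrier starting in state $u_\ell=(\ell,0,0)$ at the far left passes the sites from left to right, each site being updated by $R$; the new state consists of the updated sites. Time evolution $T_\infty$: same with carrier initially $(\infty,0,0)$, where the formulas become $d'=d+b+f-\min(e+c,d+c,d+b)$, $e'=e+b-\min(d,e)$, $f'=\min(e+c,d+c,d+b)-\min(d,e)$, $b'=\min(d,e)$, $c'=c+f+\min(d,e)-\min(e+c,d+c,d+b)$, $a'=\infty$. *)

theory Defs
  imports Main
begin

text \<open>Site states and carriers are triples of integers (a,b,c) (box, baskets, balls).
  Integers (rather than naturals) are used so that the formulas for R are read literally,
  without truncated subtraction.\<close>

type_synonym triple = "int \<times> int \<times> int"

type_synonym bstate = "int \<Rightarrow> triple"

definition V :: triple where "V = (1, 0, 0)"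

definition valid_site :: "triple \<Rightarrow> bool" where
  "valid_site s = (case s of (a, b, c) \<Rightarrow> a \<ge> 0 \<and> b \<ge> 0 \<and> c \<ge> 0 \<and> a = b - c + 1)"

definition R :: "triple \<Rightarrow> triple \<Rightarrow> triple \<times> triple" where
  "R car site = (case car of (a, b, c) \<Rightarrow> case site of (d, e, f) \<Rightarrow>
     let m1 = min (a + b) (min (a + c) (b + f));
         m2 = min (e + c) (min (d + c) (d + b));
         m3 = min (a + e) (min (d + f) (e + f))
     in ((d + m1 - m2, e + m1 - m3, f + m2 - m3),
         (a - m1 + m2, b - m1 + m3, c - m2 + m3)))"

text \<open>The map R with carrier (infinity,b,c); the carrier is represented by (b,c).\<close>
definition Rinf :: "int \<times> int \<Rightarrow> triple \<Rightarrow> triple \<times> (int \<times> int)" where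
  "Rinf car site = (case car of (b, c) \<Rightarrow> case site of (d, e, f) \<Rightarrow>
     let m2 = min (e + c) (min (d + c) (d + b))
     in ((d + b + f - m2, e + b - min d e, m2 - min d e),
         (min d e, c + f + min d e - m2)))"

fun carrier_at :: "('c \<Rightarrow> triple \<Rightarrow> triple \<times> 'c) \<Rightarrow> 'c \<Rightarrow> bstate \<Rightarrow> int \<Rightarrow> nat \<Rightarrow> 'c" where
  "carrier_at Rl c0 S N 0 = c0"
| "carrier_at Rl c0 S N (Suc n) = snd (Rl (carrier_at Rl c0 S N n) (S (N + int n)))"

text \<open>Time evolution: the carrier starts at the far left (left of every non-vacuum site;
  vacuum sites left of N are unchanged and leave the carrier u unchanged) and passes
  all sites from left to right.\<close>
definition evolve :: "('c \<Rightarrow> triple \<Rightarrow> triple \<times> 'c) \<Rightarrow> 'c \<Rightarrow> bstate \<Rightarrow> bstate" where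
  "evolve Rl c0 S = (let N = (SOME N. \<forall>j<N. S j = V) in
     (\<lambda>i. if i < N then V else fst (Rl (carrier_at Rl c0 S N (nat (i - N))) (S i))))"

definition T :: "nat \<Rightarrow> bstate \<Rightarrow> bstate" where
  "T l = evolve R (int l, 0, 0)"

definition T_inf :: "bstate \<Rightarrow> bstate" where
  "T_inf = evolve Rinf (0, 0)"

datatype letter = LF | LB nat | LU nat

fun site_of :: "letter \<Rightarrow> triple" where
  "site_of LF = (0, 0, 1)"
| "site_of (LB a) = (int a + 1, int a, 0)"
| "site_of (LU a) = (int a, int a, 1)"

fun letter_ok :: "letter \<Rightarrow> bool" where
  "letter_ok LF = True"
| "letter_ok (LB a) = (a \<ge> 1)"
| "letter_ok (LU a) = (a \<ge> 1)"

definition at :: "letter list \<Rightarrow> int \<Rightarrow> bstate" where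
  "at w p = (\<lambda>i. if p \<le> i \<and> i < p + int (length w) then site_of (w ! nat (i - p)) else V)"

fun is_U :: "letter \<Rightarrow> bool" where
  "is_U (LU a) = True" | "is_U _ = False"

definition slow_basic_soliton :: "letter list \<Rightarrow> bool" where
  "slow_basic_soliton w = (w \<noteq> [] \<and> (\<forall>x\<in>set w. letter_ok x) \<and>
     (\<forall>j. Suc j < length w \<longrightarrow> w ! j = LF \<longrightarrow> \<not> (w ! Suc j = LF \<or> is_U (w ! Suc j))))"

end

theory Submission
  imports Defs
begin

lemma evolve_gen:
  assumes h1: "S N \<noteq> V" and h2: "\<forall>j<N. S j = V" and h3: "\<forall>j\<le>N. E j = c0"
    and h4: "\<forall>j<N. S' j = V" and h5: "\<forall>j. Rl (E j) (S j) = (S' j, E (j+1))"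
  shows "evolve Rl c0 S = S'"
proof
  fix i
  define N0 where "N0 = (SOME N. \<forall>j<N. S j = V)"
  have hN0: "\<forall>j<N0. S j = V" unfolding N0_def using someI[of "\<lambda>N. \<forall>j<N. S j = V" N] h2 by blast
  have le: "N0 \<le> N" using hN0 h1 by force
  have car: "carrier_at Rl c0 S N0 n = E (N0 + int n)" for n
  proof (induction n)
    case 0 then show ?case using h3 le by simp
  next
    case (Suc n) then show ?case using h5[rule_format, of "N0 + int n"] by (simp add: ac_simps)
  qed
  show "evolve Rl c0 S i = S' i"
  proof (cases "i < N0")
    case True then show ?thesis using h4 le unfolding evolve_def N0_def[symmetric] by (simp add: Let_def)
  next
    case False
    then have "N0 + int (nat (i - N0)) = i" by simp
    then show ?thesis using False car[of "nat (i - N0)"] h5[rule_format, of i]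
      unfolding evolve_def N0_def[symmetric] by (simp add: Let_def)
  qed
qed

definition Bs :: "int \<Rightarrow> triple" where "Bs a = (a+1, a, 0)"
definition Us :: "int \<Rightarrow> triple" where "Us a = (a, a, 1)"
definition enc :: "nat \<Rightarrow> triple \<Rightarrow> triple" where
  "enc l s = (case s of (d,e,f) \<Rightarrow> (int l - 1 + d, e, f))"
definition encI :: "triple \<Rightarrow> int \<times> int" where
  "encI s = (case s of (d,e,f) \<Rightarrow> (e, f))"

definition ps :: "triple \<Rightarrow> triple \<Rightarrow> bool" where
  "ps x y = (\<exists>a b. a \<ge> 0 \<and> b \<ge> 0 \<and>
     ((x = Bs a \<and> y = Bs b) \<or> (x = Bs a \<and> y = Us b) \<or> (x = Us a \<and> y = Bs b)
      \<or> (a \<ge> 1 \<and> x = Us a \<and> y = Us b)))"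

lemma R_ps: assumes "ps x y" "2 \<le> l" shows "R (enc l x) y = (x, enc l y)"
  using assms unfolding ps_def
  by (auto simp: R_def Bs_def Us_def enc_def Let_def min_def)

lemma Rinf_ps: assumes "ps x y" shows "Rinf (encI x) y = (x, encI y)"
  using assms unfolding ps_def
  by (auto simp: Rinf_def Bs_def Us_def encI_def Let_def min_def)

lemma letter_kind: "letter_ok x \<Longrightarrow> (\<exists>a\<ge>1. site_of x = Bs a) \<or> (x = LF \<and> site_of x = Us 0) \<or> (\<exists>a\<ge>1. site_of x = Us a)"
  by (cases x) (auto simp: Bs_def Us_def)

lemma letter_any: "letter_ok x \<Longrightarrow> \<exists>a\<ge>0. site_of x = Bs a \<or> site_of x = Us a"
  by (cases x) (auto simp: Bs_def Us_def)

lemma V_Bs: "V = Bs 0" by (simp add: V_def Bs_def)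

lemma ps_V: "y = V \<or> (\<exists>b\<ge>0. y = Bs b \<or> y = Us b) \<Longrightarrow> ps V y"
  unfolding ps_def V_Bs by (metis order_refl)

lemma ps_Vr: "\<exists>a\<ge>0. x = Bs a \<or> x = Us a \<Longrightarrow> ps x V"
  unfolding ps_def V_Bs by (smt (verit))

lemma at_in: "p \<le> j \<Longrightarrow> j < p + int (length w) \<Longrightarrow> at w p j = site_of (w ! nat (j - p))"
  by (simp add: at_def)
lemma at_out: "\<not> (p \<le> j \<and> j < p + int (length w)) \<Longrightarrow> at w p j = V"
  unfolding at_def by auto

lemma at_val: "\<forall>x\<in>set w. letter_ok x \<Longrightarrow> at w p j = V \<or> (\<exists>b\<ge>0. at w p j = Bs b \<or> at w p j = Us b)"
  unfolding at_def using letter_any nth_mem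
  by (smt (verit, best) nat_less_iff)

lemma sol_pair:
  assumes A: "slow_basic_soliton A"
  shows "ps (at A p (j - 1)) (at A p j)"
proof (cases "p \<le> j - 1 \<and> j - 1 < p + int (length A)")
  case False
  then show ?thesis using at_out[OF False] ps_V at_val A unfolding slow_basic_soliton_def by metis
next
  case True
  define i where "i = nat (j - 1 - p)"
  have il: "i < length A" using True i_def by auto
  have x: "at A p (j - 1) = site_of (A ! i)" using at_in[OF conjunct1[OF True] conjunct2[OF True]] i_def by simp
  have ok: "letter_ok (A ! i)" using A il unfolding slow_basic_soliton_def by auto
  show ?thesis
  proof (cases "Suc i < length A")
    case False
    then have "at A p j = V" using i_def True by (intro at_out) auto
    then show ?thesis using x ps_Vr letter_any[OF ok] by metis
  next
    case True2: True
    have y: "at A p j = site_of (A ! Suc i)" using True True2 i_def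
      by (subst at_in) (auto simp: nat_diff_distrib intro!: arg_cong[where f="\<lambda>n. site_of (A ! n)"])
    have ok2: "letter_ok (A ! Suc i)" using A True2 unfolding slow_basic_soliton_def by auto
    have nf: "A ! i = LF \<Longrightarrow> \<exists>b\<ge>1. A ! Suc i = LB b"
      using A True2 ok2 unfolding slow_basic_soliton_def
      by (cases "A ! Suc i") auto
    show ?thesis
    proof (cases "A ! i = LF")
      case True
      then obtain b where "b \<ge> 1" "A ! Suc i = LB b" using nf by auto
      then show ?thesis unfolding x y ps_def using True
        by (intro exI[of _ 0] exI[of _ "int b"]) (auto simp: Us_def Bs_def)
    next
      case False
      then obtain a where a: "a \<ge> 1" "site_of (A ! i) = Bs a \<or> site_of (A ! i) = Us a"
        using letter_kind[OF ok] by auto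
      obtain b where b: "b \<ge> 0" "site_of (A ! Suc i) = Bs b \<or> site_of (A ! Suc i) = Us b"
        using letter_any[OF ok2] by auto
      show ?thesis unfolding x y ps_def using a b
        by (intro exI[of _ a] exI[of _ b]) auto
    qed
  qed
qed

lemma soliton_shift:
  assumes A: "slow_basic_soliton A" and l: "2 \<le> l"
  shows "T l (at A p) = at A (p + 1)" "T_inf (at A p) = at A (p + 1)"
proof -
  have pV: "at A p p \<noteq> V"
  proof -
    have "A \<noteq> []" "letter_ok (A ! 0)" using A unfolding slow_basic_soliton_def by auto
    then show ?thesis using letter_kind[of "A ! 0"] by (auto simp: at_def V_def Bs_def Us_def)
  qed
  have sh: "at A (p + 1) = (\<lambda>j. at A p (j - 1))"
    by (auto simp: at_def algebra_simps)
  show "T l (at A p) = at A (p + 1)" unfolding T_def sh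
    apply (rule evolve_gen[where N=p and E="\<lambda>j. enc l (at A p (j - 1))"])
    using pV apply simp
       apply (simp add: at_def)
      apply (simp add: at_def enc_def V_def)
     apply (simp add: at_def)
    using R_ps[OF sol_pair[OF A] l] by simp
  show "T_inf (at A p) = at A (p + 1)" unfolding T_inf_def sh
    apply (rule evolve_gen[where N=p and E="\<lambda>j. encI (at A p (j - 1))"])
    using pV apply simp
       apply (simp add: at_def)
      apply (simp add: at_def encI_def V_def)
     apply (simp add: at_def)
    using Rinf_ps[OF sol_pair[OF A]] by simp
qed


definition bl :: "int \<Rightarrow> int \<Rightarrow> int \<Rightarrow> int" where
  "bl L K i = (if i \<le> 0 then 0 else if i \<le> K then min i L else max 0 (min K L - (i - K)))"

lemma F_step:
  assumes L: "2 \<le> L" and K: "1 \<le> K"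
  shows "R (L - bl L K i, 0, bl L K i) (if 0 \<le> i \<and> i < K then (0,0,1) else (1,0,0)) =
    ((if min L K \<le> i \<and> i < min L K + K then (0,0,1) else (1,0,0)),
     (L - bl L K (i+1), 0, bl L K (i+1)))"
proof -
  consider "i < 0" | "0 \<le> i \<and> i < K" | "K \<le> i" by linarith
  then show ?thesis
  proof cases
    case 1 then show ?thesis using L K by (simp add: R_def Let_def bl_def)
  next
    case 2 then show ?thesis using L K by (auto simp add: R_def Let_def bl_def min_def)
  next
    case 3 then show ?thesis using L K by (auto simp add: R_def Let_def bl_def min_def max_def)
  qed
qed

lemma at_rep: "at (replicate k LF) q j = (if q \<le> j \<and> j < q + int k then (0,0,1) else V)"
  by (auto simp: at_def)

lemma F_shift:
  assumes l: "2 \<le> l" and k: "1 \<le> k"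
  shows "T l (at (replicate k LF) p) = at (replicate k LF) (p + int (min l k))"
  unfolding T_def
proof (rule evolve_gen[where N=p and E="\<lambda>j. (int l - bl (int l) (int k) (j - p), 0, bl (int l) (int k) (j - p))"])
  show "at (replicate k LF) p p \<noteq> V" using k by (simp add: at_rep V_def)
  show "\<forall>j<p. at (replicate k LF) p j = V" by (simp add: at_rep)
  show "\<forall>j\<le>p. (int l - bl (int l) (int k) (j - p), 0, bl (int l) (int k) (j - p)) = (int l, 0, 0)"
    by (simp add: bl_def)
  show "\<forall>j<p. at (replicate k LF) (p + int (min l k)) j = V" by (simp add: at_rep)
  show "\<forall>j. R (int l - bl (int l) (int k) (j - p), 0, bl (int l) (int k) (j - p)) (at (replicate k LF) p j) =
         (at (replicate k LF) (p + int (min l k)) j,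
          int l - bl (int l) (int k) (j + 1 - p), 0, bl (int l) (int k) (j + 1 - p))"
  proof
    fix j
    have e1: "at (replicate k LF) p j = (if 0 \<le> j - p \<and> j - p < int k then (0,0,1) else (1,0,0))"
      by (auto simp: at_rep V_def)
    have e2: "at (replicate k LF) (p + int (min l k)) j =
       (if min (int l) (int k) \<le> j - p \<and> j - p < min (int l) (int k) + int k then (0,0,1) else (1,0,0))"
      by (auto simp: at_rep V_def)
    have e3: "j + 1 - p = (j - p) + 1" by simp
    show "R (int l - bl (int l) (int k) (j - p), 0, bl (int l) (int k) (j - p)) (at (replicate k LF) p j) =
         (at (replicate k LF) (p + int (min l k)) j,
          int l - bl (int l) (int k) (j + 1 - p), 0, bl (int l) (int k) (j + 1 - p))"
      unfolding e1 e2 e3 by (rule F_step) (use l k in auto)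
  qed
qed

theorem mainTheorem6:
  fixes l :: nat
  assumes "1 < l"
  shows "(\<forall>k::nat. k \<ge> 1 \<longrightarrow> (\<forall>p::int.
            T l (at (replicate k LF) p) = at (replicate k LF) (p + int (min l k))))
       \<and> (\<forall>A. slow_basic_soliton A \<longrightarrow> (\<forall>p::int.
            T l (at A p) = at A (p + 1) \<and> T_inf (at A p) = at A (p + 1)))"
  using F_shift soliton_shift[of _ l] assms by (auto simp del: One_nat_def)

end
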